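(* In the setting below, let $\lambda>0$, $\theta\in\mathbb{R}$ and $\delta=\lambda\ln\beta$. Let $\mathcal{T}$ be the (random) output tree of PrivTree$(D,\lambda,\theta,\delta)$ and let $\mathcal{T}^*$ be the tree produced by the same procedure except that each visited node $v$ is split if and only if $c(v)>\theta$ (no bias and no noise). Assume $\mathcal{T}^*$ is finite. If $|\mathcal{T}^*|>1$, then $\mathbb{E}[|\mathcal{T}|]\le 2\,|\mathcal{T}^*|$, where $|\cdot|$ denotes the number of nodes of a tree.
   Context: $\mathrm{Lap}(\lambda)$ is the Laplace distribution with density $\frac{1}{2\lambda}e^{-|y|/\lambda}$. Setting: $\Omega$ is a domain and there is a fixed, data-independent hierarchical splitting scheme of fanout $\beta\ge 2$: an infinite rooted tree of candidate nodes in which every node $v$ has exactly $\beta$ children, each node $v$ carries a sub-domain $\mathrm{dom}(v)\subseteq\Omega$, the root $v_1$ has $\mathrm{dom}(v_1)=\Omega$, and the sub-domains of the $\beta$ children of $v$ partition $\mathrm{dom}(v)$. $\mathrm{depth}(v)$ is the hop distance from $v$ to the root. A dataset $D$ is a finite multiset of points of $\Omega$; $c(v)$ is the number of points of $D$ lying in $\mathrm{dom}(v)$. PrivTree$(D,\lambda,\theta,\delta)$: start with the tree consisting only of the root, marked unvisited. While some node $v$ is unvisited: mark $v$ visited; set $b(v)=\max\{\theta-\delta,\ c(v)-\mathrm{depth}(v)\cdot\delta\}$; set $\hat b(v)=b(v)+\eta_v$ with $\eta_v\sim\mathrm{Lap}(\lambda)$ fresh and independent; if $\hat b(v)>\theta$,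 add all $\beta$ children of $v$ as unvisited nodes. The output is the resulting tree of nodes. *)

theory Defs
  imports "HOL-Probability.Probability"
begin

definition laplace_measure :: "real \<Rightarrow> real measure" where
  "laplace_measure lam = density lborel (\<lambda>y. ennreal (exp (- \<bar>y\<bar> / lam) / (2 * lam)))"

text \<open>Candidate nodes of the infinite beta-ary tree: node v is encoded by the list of child
  indices on the path from the root (root = []); children of v are v @ [i] for i < beta.\<close>
definition cand_nodes :: "nat \<Rightarrow> nat list set" where
  "cand_nodes \<beta> = {v. \<forall>i\<in>set v. i < \<beta>}"

definition splitting_scheme :: "'a set \<Rightarrow> nat \<Rightarrow> (nat list \<Rightarrow> 'a set) \<Rightarrow> bool" where
  "splitting_scheme \<Omega> \<beta> sdom \<longleftrightarrow> 2 \<le> \<beta> \<and> sdom [] = \<Omega> \<and>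
     (\<forall>v \<in> cand_nodes \<beta>. (\<Union>i<\<beta>. sdom (v @ [i])) = sdom v \<and>
        (\<forall>i<\<beta>. \<forall>j<\<beta>. i \<noteq> j \<longrightarrow> sdom (v @ [i]) \<inter> sdom (v @ [j]) = {}))"

definition cnt :: "'a multiset \<Rightarrow> (nat list \<Rightarrow> 'a set) \<Rightarrow> nat list \<Rightarrow> nat" where
  "cnt D sdom v = size (filter_mset (\<lambda>x. x \<in> sdom v) D)"

definition biased_cnt :: "'a multiset \<Rightarrow> (nat list \<Rightarrow> 'a set) \<Rightarrow> real \<Rightarrow> real \<Rightarrow> nat list \<Rightarrow> real" where
  "biased_cnt D sdom \<theta> \<delta> v = max (\<theta> - \<delta>) (real (cnt D sdom v) - real (length v) * \<delta>)"

text \<open>Output tree of PrivTree given the noise values eta (fresh noise eta v for every node v):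
  a node is in the tree iff every proper ancestor u was split, i.e. b(u) + eta u > theta.\<close>
definition privtree_out ::
  "nat \<Rightarrow> 'a multiset \<Rightarrow> (nat list \<Rightarrow> 'a set) \<Rightarrow> real \<Rightarrow> real \<Rightarrow> (nat list \<Rightarrow> real) \<Rightarrow> nat list set" where
  "privtree_out \<beta> D sdom \<theta> \<delta> \<eta> =
     {v \<in> cand_nodes \<beta>. \<forall>k < length v. biased_cnt D sdom \<theta> \<delta> (take k v) + \<eta> (take k v) > \<theta>}"

definition exact_tree ::
  "nat \<Rightarrow> 'a multiset \<Rightarrow> (nat list \<Rightarrow> 'a set) \<Rightarrow> real \<Rightarrow> nat list set" where
  "exact_tree \<beta> D sdom \<theta> = {v \<in> cand_nodes \<beta>. \<forall>k < length v. real (cnt D sdom (take k v)) > \<theta>}"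

definition noise_space :: "real \<Rightarrow> (nat list \<Rightarrow> real) measure" where
  "noise_space lam = PiM UNIV (\<lambda>_. laplace_measure lam)"

end

theory Submission
  imports Defs
begin


lemma exp_dens_total:
  assumes "0 < l" shows "(\<integral>\<^sup>+x. ennreal (exponential_density l x) \<partial>lborel) = 1"
proof -
  interpret prob_space "density lborel (exponential_density l)"
    by (rule prob_space_exponential_density[OF assms])
  have "emeasure (density lborel (exponential_density l)) UNIV = 1"
    using emeasure_space_1 by simp
  then show ?thesis by (simp add: emeasure_density)
qed

lemma exp_dens_tail:
  assumes "0 < l" "0 \<le> a"
  shows "(\<integral>\<^sup>+x. ennreal (exponential_density l x) * indicator {a<..} x \<partial>lborel) = ennreal (exp (- l * a))"
proof -
  interpret P: prob_space "density lborel (exponential_density l)"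
    by (rule prob_space_exponential_density[OF assms(1)])
  have "emeasure (density lborel (exponential_density l)) {a<..}
      = emeasure (density lborel (exponential_density l)) (UNIV - {..a})"
    by (rule arg_cong[where f="emeasure _"]) auto
  also have "\<dots> = emeasure (density lborel (exponential_density l)) UNIV
      - emeasure (density lborel (exponential_density l)) {..a}"
    by (rule emeasure_Diff) auto
  also have "\<dots> = 1 - ennreal (1 - exp (- l * a))"
    using P.emeasure_space_1 emeasure_erlang_density[OF assms(1), of 0 a] assms
    by (simp add: erlang_CDF_0)
  also have "\<dots> = ennreal (exp (- l * a))"
    using assms by (simp add: ennreal_1[symmetric] ennreal_minus del: ennreal_1)
  finally show ?thesis by (simp add: emeasure_density)
qed

lemma laplace_prob: assumes "lam > 0" shows "prob_space (laplace_measure lam)"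
proof
  define l where "l = 1 / lam"
  have l: "l > 0" using assms by (simp add: l_def)
  let ?e = "\<lambda>x. ennreal (exponential_density l x)"
  have ae: "AE x in lborel. ennreal (exp (- \<bar>x\<bar> / lam) / (2 * lam)) = ?e x / 2 + ?e (-x) / 2"
    using AE_lborel_singleton[of 0]
  proof (rule AE_mp, intro AE_I2 impI)
    fix x :: real assume "x \<noteq> 0"
    then show "ennreal (exp (- \<bar>x\<bar> / lam) / (2 * lam)) = ?e x / 2 + ?e (-x) / 2"
      using assms by (cases "x > 0") (auto simp: exponential_density_def l_def ennreal_divide_numeral abs_if field_simps)
  qed
  have "(\<integral>\<^sup>+x. ?e (-x) \<partial>lborel) = (\<integral>\<^sup>+x. ?e x \<partial>distr lborel borel uminus)"
    by (subst nn_integral_distr) auto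
  also have "\<dots> = 1" by (simp add: lborel_distr_uminus exp_dens_total[OF l])
  finally have m: "(\<integral>\<^sup>+x. ?e (-x) \<partial>lborel) = 1" .
  have "emeasure (laplace_measure lam) (space (laplace_measure lam))
      = (\<integral>\<^sup>+x. ennreal (exp (- \<bar>x\<bar> / lam) / (2 * lam)) \<partial>lborel)"
    by (simp add: laplace_measure_def emeasure_density)
  also have "\<dots> = (\<integral>\<^sup>+x. ?e x / 2 + ?e (-x) / 2 \<partial>lborel)"
    by (rule nn_integral_cong_AE[OF ae])
  also have "\<dots> = (\<integral>\<^sup>+x. ?e x \<partial>lborel) / 2 + (\<integral>\<^sup>+x. ?e (-x) \<partial>lborel) / 2"
    by (subst nn_integral_add) (auto simp: nn_integral_divide)
  also have "\<dots> = 1" using m exp_dens_total[OF l] by (simp flip: add_divide_distrib_ennreal add: ennreal_divide_self)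
  finally show "emeasure (laplace_measure lam) (space (laplace_measure lam)) = 1" .
qed


lemma laplace_tail:
  assumes "lam > 0" "d \<ge> 0"
  shows "emeasure (laplace_measure lam) {d<..} = ennreal (exp (- d / lam) / 2)"
proof -
  define l where "l = 1 / lam"
  have l: "l > 0" using assms by (simp add: l_def)
  have "emeasure (laplace_measure lam) {d<..}
      = (\<integral>\<^sup>+x. ennreal (exp (- \<bar>x\<bar> / lam) / (2 * lam)) * indicator {d<..} x \<partial>lborel)"
    by (simp add: laplace_measure_def emeasure_density)
  also have "\<dots> = (\<integral>\<^sup>+x. (ennreal (exponential_density l x) * indicator {d<..} x) / 2 \<partial>lborel)"
  proof (rule nn_integral_cong)
    fix x :: real
    show "ennreal (exp (- \<bar>x\<bar> / lam) / (2 * lam)) * indicator {d<..} x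
        = ennreal (exponential_density l x) * indicator {d<..} x / 2"
    proof (cases "d < x")
      case True
      then have "0 < x" using assms by simp
      then show ?thesis using True assms
        by (simp add: exponential_density_def l_def ennreal_divide_numeral field_simps)
    qed simp
  qed
  also have "\<dots> = (\<integral>\<^sup>+x. ennreal (exponential_density l x) * indicator {d<..} x \<partial>lborel) / 2"
    by (rule nn_integral_divide) simp
  also have "\<dots> = ennreal (exp (- l * d)) / 2"
    using exp_dens_tail[OF l assms(2)] by simp
  also have "\<dots> = ennreal (exp (- d / lam) / 2)"
    by (simp add: ennreal_divide_numeral l_def)
  finally show ?thesis .
qed

lemma noise_pps: "0 < lam \<Longrightarrow> product_prob_space (\<lambda>_::nat list. laplace_measure lam)"
  unfolding product_prob_space_def product_prob_space_axioms_def product_sigma_finite_def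
  by (auto intro: prob_space_imp_sigma_finite laplace_prob)

lemma noise_prob: "0 < lam \<Longrightarrow> prob_space (noise_space lam)"
proof -
  assume lam: "0 < lam"
  interpret product_prob_space "\<lambda>_::nat list. laplace_measure lam" UNIV by (rule noise_pps[OF lam])
  show ?thesis unfolding noise_space_def by (rule prob_spaceI) (rule P.emeasure_space_1)
qed

lemma space_noise: "space (noise_space lam) = UNIV"
  by (simp add: noise_space_def space_PiM laplace_measure_def)

lemma comp_meas: "(\<lambda>\<eta>. \<eta> i) \<in> borel_measurable (noise_space lam)"
proof -
  have "(\<lambda>\<eta>. \<eta> i) \<in> measurable (PiM UNIV (\<lambda>_. laplace_measure lam)) (laplace_measure lam)"
    by (rule measurable_component_singleton) simp
  moreover have "sets (laplace_measure lam) = sets borel" by (simp add: laplace_measure_def)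
  ultimately show ?thesis unfolding noise_space_def by (metis measurable_cong_sets)
qed

lemma C_meas:
  "{\<eta>. P0 \<and> (\<forall>j. k \<le> j \<and> j < length v \<longrightarrow> d < \<eta> (take j v))} \<in> sets (noise_space lam)"
proof (cases P0)
  case True
  have [measurable]: "\<And>i. (\<lambda>\<eta>. \<eta> i) \<in> borel_measurable (noise_space lam)" by (rule comp_meas)
  have "{\<eta> \<in> space (noise_space lam). \<forall>j. k \<le> j \<and> j < length v \<longrightarrow> d < \<eta> (take j v)} \<in> sets (noise_space lam)"
    by measurable
  then show ?thesis using True by (simp add: space_noise)
qed simp

lemma C_prob:
  assumes "lam > 0" "d \<ge> 0"
  shows "emeasure (noise_space lam) {\<eta>. P0 \<and> (\<forall>j. k \<le> j \<and> j < length v \<longrightarrow> d < \<eta> (take j v))}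
    = (if P0 then ennreal (exp (- d / lam) / 2) ^ (length v - k) else 0)"
proof (cases P0)
  case True
  interpret product_prob_space "\<lambda>_::nat list. laplace_measure lam" UNIV by (rule noise_pps[OF assms(1)])
  let ?J = "(\<lambda>j. take j v) ` {k..<length v}"
  have inj: "inj_on (\<lambda>j. take j v) {k..<length v}"
  proof (rule inj_onI)
    fix a b assume "a \<in> {k..<length v}" "b \<in> {k..<length v}" "take a v = take b v"
    then have "length (take a v) = length (take b v)" by simp
    then show "a = b" using \<open>a \<in> {k..<length v}\<close> \<open>b \<in> {k..<length v}\<close> by simp
  qed
  have eq: "{\<eta>. P0 \<and> (\<forall>j. k \<le> j \<and> j < length v \<longrightarrow> d < \<eta> (take j v))}
      = {x \<in> space (PiM UNIV (\<lambda>_. laplace_measure lam)). \<forall>i\<in>?J. x i \<in> {d<..}}"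
    using True by (auto simp: space_PiM laplace_measure_def)
  have "emeasure (noise_space lam) {\<eta>. P0 \<and> (\<forall>j. k \<le> j \<and> j < length v \<longrightarrow> d < \<eta> (take j v))}
      = (\<Prod>i\<in>?J. emeasure (laplace_measure lam) {d<..})"
    unfolding noise_space_def eq by (rule emeasure_PiM_Collect) (auto simp: laplace_measure_def)
  also have "\<dots> = ennreal (exp (- d / lam) / 2) ^ (length v - k)"
    using laplace_tail[OF assms] card_image[OF inj] by simp
  finally show ?thesis using True by simp
qed simp

lemma cnt_set_mono:
  assumes "A \<subseteq> B"
  shows "size (filter_mset (\<lambda>x. x \<in> A) D) \<le> size (filter_mset (\<lambda>x. x \<in> B) D)"
proof -
  have "filter_mset (\<lambda>x. x \<in> A) D = filter_mset (\<lambda>x. x \<in> A) (filter_mset (\<lambda>x. x \<in> B) D)"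
    using assms by (auto simp: multiset_eq_iff)
  then show ?thesis by (metis multiset_filter_subset size_mset_mono)
qed

lemma cnt_take_mono:
  assumes scheme: "splitting_scheme \<Omega> \<beta> sdom" and vW: "v \<in> cand_nodes \<beta>"
  shows "k \<le> j \<Longrightarrow> j \<le> length v \<Longrightarrow> cnt D sdom (take j v) \<le> cnt D sdom (take k v)"
proof (induction j)
  case 0 then show ?case by simp
next
  case (Suc j)
  show ?case
  proof (cases "k = Suc j")
    case True then show ?thesis by simp
  next
    case False
    with Suc.prems have kj: "k \<le> j" and jl: "j < length v" by auto
    have tj: "take j v \<in> cand_nodes \<beta>" using vW by (auto simp: cand_nodes_def dest: in_set_takeD)
    have vj: "v ! j < \<beta>" using vW jl by (auto simp: cand_nodes_def)
    have "(\<Union>i<\<beta>. sdom (take j v @ [i])) = sdom (take j v)"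
      using scheme tj unfolding splitting_scheme_def by blast
    then have "sdom (take j v @ [v ! j]) \<subseteq> sdom (take j v)" using vj by blast
    then have "cnt D sdom (take (Suc j) v) \<le> cnt D sdom (take j v)"
      by (simp add: take_Suc_conv_app_nth[OF jl] cnt_def cnt_set_mono)
    also have "\<dots> \<le> cnt D sdom (take k v)" using Suc.IH kj jl by simp
    finally show ?thesis .
  qed
qed

lemma key_comb:
  assumes scheme: "splitting_scheme \<Omega> \<beta> sdom"
    and dpos: "0 \<le> \<delta>"
    and nontriv: "card (exact_tree \<beta> D sdom \<theta>) > 1"
    and v: "v \<in> privtree_out \<beta> D sdom \<theta> \<delta> \<eta>"
  shows "(v \<in> exact_tree \<beta> D sdom \<theta> \<and> \<theta> < real (cnt D sdom v)) \<or>
    (\<exists>u \<in> exact_tree \<beta> D sdom \<theta>. real (cnt D sdom u) \<le> \<theta> \<and>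
       (take (length u) v = u \<and> v \<in> cand_nodes \<beta>) \<and>
       (\<forall>j. length u \<le> j \<and> j < length v \<longrightarrow> \<delta> < \<eta> (take j v)))"
proof -
  let ?T = "exact_tree \<beta> D sdom \<theta>"
  have vW: "v \<in> cand_nodes \<beta>"
    and vT: "\<And>k. k < length v \<Longrightarrow> \<theta> < biased_cnt D sdom \<theta> \<delta> (take k v) + \<eta> (take k v)"
    using v by (auto simp: privtree_out_def)
  have root: "\<theta> < real (cnt D sdom [])"
  proof (rule ccontr)
    assume nr: "\<not> \<theta> < real (cnt D sdom [])"
    have "?T \<subseteq> {[]}"
    proof
      fix x assume xT: "x \<in> ?T"
      show "x \<in> {[]}"
      proof (rule ccontr)
        assume "x \<notin> {[]}"
        then have "0 < length x" by auto
        with xT have "\<theta> < real (cnt D sdom (take 0 x))" unfolding exact_tree_def by blast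
        then show False using nr by simp
      qed
    qed
    then have "card ?T \<le> card {[]::nat list}" by (intro card_mono) auto
    with nontriv show False by simp
  qed
  show ?thesis
  proof (cases "v \<in> ?T")
    case True
    show ?thesis
    proof (cases "\<theta> < real (cnt D sdom v)")
      case True with \<open>v \<in> ?T\<close> show ?thesis by simp
    next
      case False
      then have "real (cnt D sdom v) \<le> \<theta>" by simp
      with \<open>v \<in> ?T\<close> vW show ?thesis by auto
    qed
  next
    case False
    then obtain k where k: "k < length v" "\<not> \<theta> < real (cnt D sdom (take k v))"
      using vW by (auto simp: exact_tree_def)
    define m where "m = (LEAST k. k < length v \<and> \<not> \<theta> < real (cnt D sdom (take k v)))"
    have m: "m < length v" "\<not> \<theta> < real (cnt D sdom (take m v))"
      using LeastI[of "\<lambda>k. k < length v \<and> \<not> \<theta> < real (cnt D sdom (take k v))" k] k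
      by (auto simp: m_def)
    have mmin: "\<theta> < real (cnt D sdom (take i v))" if "i < m" for i
    proof -
      have "\<not> (i < length v \<and> \<not> \<theta> < real (cnt D sdom (take i v)))"
        using not_less_Least[OF that[unfolded m_def]] .
      with that m(1) show ?thesis by auto
    qed
    have m0: "m \<noteq> 0"
    proof
      assume "m = 0"
      then show False using m(2) root by simp
    qed
    let ?u = "take m v"
    have uW: "?u \<in> cand_nodes \<beta>" using vW by (auto simp: cand_nodes_def dest: in_set_takeD)
    have uT: "?u \<in> ?T" unfolding exact_tree_def using uW mmin m(1) by (auto simp: min_def)
    have lu: "length ?u = m" using m(1) by simp
    have J: "\<delta> < \<eta> (take j v)" if j: "m \<le> j" "j < length v" for j
    proof -
      have h1: "\<theta> < biased_cnt D sdom \<theta> \<delta> (take j v) + \<eta> (take j v)" using vT j by simp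
      have "cnt D sdom (take j v) \<le> cnt D sdom (take m v)"
        using cnt_take_mono[OF scheme vW, of m j D] j by simp
      then have c: "real (cnt D sdom (take j v)) \<le> \<theta>" using m(2) by linarith
      have "1 \<le> real j" using j m0 by simp
      then have "\<delta> \<le> real j * \<delta>" using dpos by (metis mult_1 mult_right_mono)
      then have "real (cnt D sdom (take j v)) - real (length (take j v)) * \<delta> \<le> \<theta> - \<delta>"
        using c j by simp
      then have "biased_cnt D sdom \<theta> \<delta> (take j v) = \<theta> - \<delta>"
        unfolding biased_cnt_def by simp
      with h1 show ?thesis by simp
    qed
    have "real (cnt D sdom ?u) \<le> \<theta>" using m(2) by simp
    then show ?thesis using uT lu vW J by (intro disjI2 bexI[of _ ?u]) auto
  qed
qed

lemma geo_count:
  assumes "0 < \<beta>" "u \<in> cand_nodes \<beta>"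
  shows "(\<integral>\<^sup>+v. (if take (length u) v = u \<and> v \<in> cand_nodes \<beta>
      then ennreal (1 / real \<beta> / 2) ^ (length v - length u) else 0) \<partial>count_space UNIV) = 2"
proof -
  let ?W = "cand_nodes \<beta>"
  let ?k = "length u"
  define q where "q = ennreal (1 / real \<beta> / 2)"
  define f where "f v = (if take ?k v = u \<and> v \<in> ?W then q ^ (length v - ?k) else 0)" for v
  define L where "L n = {w. set w \<subseteq> {..<\<beta>} \<and> length w = n}" for n
  have inj: "inj_on ((@) u) ?W" by (auto simp: inj_on_def)
  have "(\<integral>\<^sup>+v. f v \<partial>count_space UNIV) = (\<integral>\<^sup>+v. f v * indicator ((@) u ` ?W) v \<partial>count_space UNIV)"
  proof (rule nn_integral_cong)
    fix v
    show "f v = f v * indicator ((@) u ` ?W) v"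
    proof (cases "take ?k v = u \<and> v \<in> ?W")
      case True
      then have "v = u @ drop ?k v" by (metis append_take_drop_id)
      moreover have "drop ?k v \<in> ?W" using True by (auto simp: cand_nodes_def dest: in_set_dropD)
      ultimately have "v \<in> (@) u ` ?W" by (metis imageI)
      then show ?thesis using True by (simp add: f_def)
    next
      case False then show ?thesis by (auto simp: f_def)
    qed
  qed
  also have "\<dots> = (\<integral>\<^sup>+v. f v \<partial>count_space ((@) u ` ?W))"
    by (rule nn_integral_count_space_indicator[symmetric]) (simp add: NO_MATCH_def)
  also have "\<dots> = (\<integral>\<^sup>+w. f (u @ w) \<partial>count_space ?W)"
    by (rule nn_integral_bij_count_space[symmetric]) (rule bij_betw_imageI[OF inj refl])
  also have "\<dots> = (\<integral>\<^sup>+w. q ^ length w \<partial>count_space ?W)"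
    by (rule nn_integral_cong) (use assms(2) in \<open>auto simp: f_def cand_nodes_def\<close>)
  also have "\<dots> = (\<integral>\<^sup>+w. q ^ length w * indicator ?W w \<partial>count_space UNIV)"
    by (rule nn_integral_count_space_indicator) (simp add: NO_MATCH_def)
  also have "\<dots> = (\<integral>\<^sup>+w. (\<Sum>n. q ^ n * indicator (L n) w) \<partial>count_space UNIV)"
  proof (rule nn_integral_cong)
    fix w :: "nat list"
    have "(\<lambda>n. q ^ n * indicator (L n) w) = (\<lambda>n. if n = length w then q ^ length w * indicator ?W w else 0)"
      by (auto simp: L_def cand_nodes_def indicator_def fun_eq_iff)
    then show "q ^ length w * indicator ?W w = (\<Sum>n. q ^ n * indicator (L n) w)"
      using sums_unique[OF sums_single[of "length w" "\<lambda>_. q ^ length w * indicator ?W w"]] by simp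
  qed
  also have "\<dots> = (\<Sum>n. \<integral>\<^sup>+w. q ^ n * indicator (L n) w \<partial>count_space UNIV)"
    by (rule nn_integral_suminf) (rule borel_measurable_count_space)
  also have "\<dots> = (\<Sum>n. ennreal ((1/2) ^ n))"
  proof (rule suminf_cong)
    fix n
    have fin: "finite (L n)" unfolding L_def by (rule finite_lists_length_eq) simp
    have cardL: "card (L n) = \<beta> ^ n" unfolding L_def using card_lists_length_eq[of "{..<\<beta>}" n] by simp
    have key: "(1 / real \<beta> / 2) ^ n * real \<beta> ^ n = (1/2) ^ n"
    proof -
      have "(1 / real \<beta> / 2) * real \<beta> = 1/2" using assms(1) by simp
      then show ?thesis by (metis power_mult_distrib)
    qed
    have "(\<integral>\<^sup>+w. q ^ n * indicator (L n) w \<partial>count_space UNIV) = q ^ n * of_nat (\<beta> ^ n)"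
      using fin cardL by (simp add: nn_integral_cmult_indicator)
    also have "\<dots> = ennreal ((1 / real \<beta> / 2) ^ n) * ennreal (real \<beta> ^ n)"
      unfolding q_def by (simp add: ennreal_power ennreal_of_nat_eq_real_of_nat)
    also have "\<dots> = ennreal ((1 / real \<beta> / 2) ^ n * real \<beta> ^ n)"
      by (rule ennreal_mult[symmetric]) auto
    also have "\<dots> = ennreal ((1/2) ^ n)" using key by simp
    finally show "(\<integral>\<^sup>+w. q ^ n * indicator (L n) w \<partial>count_space UNIV) = ennreal ((1/2) ^ n)" .
  qed
  also have "\<dots> = ennreal 2"
  proof (rule suminf_ennreal_eq)
    show "(\<lambda>n. (1/2::real) ^ n) sums 2" using geometric_sums[of "1/2::real"] by simp
  qed simp
  finally have X: "(\<integral>\<^sup>+v. f v \<partial>count_space UNIV) = ennreal 2" .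
  show ?thesis using X unfolding f_def q_def by simp
qed

theorem lemma3:
  fixes \<Omega> :: "'a set" and \<beta> :: nat and sdom :: "nat list \<Rightarrow> 'a set"
    and D :: "'a multiset" and lam \<theta> \<delta> :: real
  assumes scheme: "splitting_scheme \<Omega> \<beta> sdom"
    and data: "set_mset D \<subseteq> \<Omega>"
    and lam_pos: "lam > 0"
    and delta_def: "\<delta> = lam * ln (real \<beta>)"
    and fin: "finite (exact_tree \<beta> D sdom \<theta>)"
    and nontriv: "card (exact_tree \<beta> D sdom \<theta>) > 1"
  shows "(\<integral>\<^sup>+ \<eta>. emeasure (count_space UNIV) (privtree_out \<beta> D sdom \<theta> \<delta> \<eta>) \<partial>noise_space lam)
           \<le> 2 * of_nat (card (exact_tree \<beta> D sdom \<theta>))"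
proof -
  let ?T = "exact_tree \<beta> D sdom \<theta>"
  let ?W = "cand_nodes \<beta>"
  let ?P = "noise_space lam"
  define L where "L = {u \<in> ?T. real (cnt D sdom u) \<le> \<theta>}"
  define I where "I = {u \<in> ?T. \<theta> < real (cnt D sdom u)}"
  define C where "C u v = {\<eta>. (take (length u) v = u \<and> v \<in> ?W) \<and>
      (\<forall>j. length u \<le> j \<and> j < length v \<longrightarrow> \<delta> < \<eta> (take j v))}" for u v :: "nat list"
  define q where "q = ennreal (exp (- \<delta> / lam) / 2)"
  have b2: "2 \<le> \<beta>" using scheme by (simp add: splitting_scheme_def)
  have dpos: "0 \<le> \<delta>" unfolding delta_def using lam_pos b2
    by (auto intro!: mult_nonneg_nonneg ln_ge_zero)
  have q_eq: "q = ennreal (1 / real \<beta> / 2)"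
  proof -
    have "- \<delta> / lam = - ln (real \<beta>)" using lam_pos by (simp add: delta_def)
    moreover have "exp (- ln (real \<beta>)) = 1 / real \<beta>" using b2 by (simp add: exp_minus inverse_eq_divide)
    ultimately show ?thesis by (simp add: q_def)
  qed
  have fin_LI: "finite L" "finite I" using fin by (auto simp: L_def I_def)
  have TIL: "?T = I \<union> L" "I \<inter> L = {}" by (auto simp: I_def L_def)
  have LW: "u \<in> ?W" if "u \<in> L" for u using that by (auto simp: L_def exact_tree_def)
  have C_sets: "C u v \<in> sets ?P" for u v unfolding C_def by (rule C_meas)
  have C_em: "emeasure ?P (C u v) = (if take (length u) v = u \<and> v \<in> ?W then q ^ (length v - length u) else 0)" for u v
    unfolding C_def q_def by (rule C_prob[OF lam_pos dpos])
  have Cind: "(\<lambda>\<eta>. indicator (C u v) \<eta> :: ennreal) \<in> borel_measurable ?P" for u v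
    by (rule borel_measurable_indicator[OF C_sets])
  interpret Pp: prob_space ?P by (rule noise_prob[OF lam_pos])
  have pw: "indicator (privtree_out \<beta> D sdom \<theta> \<delta> \<eta>) v \<le> indicator I v + (\<Sum>u\<in>L. indicator (C u v) \<eta> :: ennreal)" for \<eta> v
  proof (cases "v \<in> privtree_out \<beta> D sdom \<theta> \<delta> \<eta>")
    case True
    note kc = key_comb[OF scheme dpos nontriv True]
    show ?thesis
    proof (cases "v \<in> I")
      case True
      then show ?thesis using \<open>v \<in> privtree_out \<beta> D sdom \<theta> \<delta> \<eta>\<close> by simp
    next
      case False
      with kc obtain u where u: "u \<in> L" "\<eta> \<in> C u v" unfolding I_def L_def C_def by auto
      have "(1::ennreal) \<le> (\<Sum>u\<in>L. indicator (C u v) \<eta>)"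
        using member_le_sum[of u L "\<lambda>u. indicator (C u v) \<eta> :: ennreal"] u fin_LI by simp
      also have "\<dots> \<le> indicator I v + (\<Sum>u\<in>L. indicator (C u v) \<eta>)" by simp
      finally show ?thesis using True by simp
    qed
  qed simp
  have "(\<integral>\<^sup>+\<eta>. emeasure (count_space UNIV) (privtree_out \<beta> D sdom \<theta> \<delta> \<eta>) \<partial>?P)
      \<le> (\<integral>\<^sup>+\<eta>. (\<integral>\<^sup>+v. (indicator I v + (\<Sum>u\<in>L. indicator (C u v) \<eta>)) \<partial>count_space UNIV) \<partial>?P)"
  proof (rule nn_integral_mono)
    fix \<eta>
    have "emeasure (count_space UNIV) (privtree_out \<beta> D sdom \<theta> \<delta> \<eta>)
        = (\<integral>\<^sup>+v. indicator (privtree_out \<beta> D sdom \<theta> \<delta> \<eta>) v \<partial>count_space UNIV)"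
      by (rule nn_integral_indicator[symmetric]) simp
    also have "\<dots> \<le> (\<integral>\<^sup>+v. (indicator I v + (\<Sum>u\<in>L. indicator (C u v) \<eta>)) \<partial>count_space UNIV)"
      by (rule nn_integral_mono) (rule pw)
    finally show "emeasure (count_space UNIV) (privtree_out \<beta> D sdom \<theta> \<delta> \<eta>)
        \<le> (\<integral>\<^sup>+v. (indicator I v + (\<Sum>u\<in>L. indicator (C u v) \<eta>)) \<partial>count_space UNIV)" .
  qed
  also have "\<dots> = (\<integral>\<^sup>+v. (\<integral>\<^sup>+\<eta>. (indicator I v + (\<Sum>u\<in>L. indicator (C u v) \<eta>)) \<partial>?P) \<partial>count_space UNIV)"
    by (rule nn_integral_count_space_nn_integral) (auto intro!: borel_measurable_add borel_measurable_sum Cind)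
  also have "\<dots> = (\<integral>\<^sup>+v. (indicator I v + (\<Sum>u\<in>L. emeasure ?P (C u v))) \<partial>count_space UNIV)"
  proof (rule nn_integral_cong)
    fix v :: "nat list"
    have "(\<integral>\<^sup>+\<eta>. (indicator I v + (\<Sum>u\<in>L. indicator (C u v) \<eta>)) \<partial>?P)
        = (\<integral>\<^sup>+\<eta>. indicator I v \<partial>?P) + (\<integral>\<^sup>+\<eta>. (\<Sum>u\<in>L. indicator (C u v) \<eta>) \<partial>?P)"
      by (rule nn_integral_add) (auto intro!: borel_measurable_sum Cind)
    also have "(\<integral>\<^sup>+\<eta>. (\<Sum>u\<in>L. indicator (C u v) \<eta>) \<partial>?P) = (\<Sum>u\<in>L. (\<integral>\<^sup>+\<eta>. indicator (C u v) \<eta> \<partial>?P))"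
      by (rule nn_integral_sum) (rule Cind)
    also have "\<dots> = (\<Sum>u\<in>L. emeasure ?P (C u v))"
      by (rule sum.cong) (auto intro: nn_integral_indicator C_sets)
    also have "(\<integral>\<^sup>+\<eta>. indicator I v \<partial>?P) = indicator I v"
      by (simp add: Pp.emeasure_space_1)
    finally show "(\<integral>\<^sup>+\<eta>. (indicator I v + (\<Sum>u\<in>L. indicator (C u v) \<eta>)) \<partial>?P)
        = indicator I v + (\<Sum>u\<in>L. emeasure ?P (C u v))" .
  qed
  finally have A1: "(\<integral>\<^sup>+\<eta>. emeasure (count_space UNIV) (privtree_out \<beta> D sdom \<theta> \<delta> \<eta>) \<partial>?P)
      \<le> (\<integral>\<^sup>+v. (indicator I v + (\<Sum>u\<in>L. emeasure ?P (C u v))) \<partial>count_space UNIV)" .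
  have e0: "(\<integral>\<^sup>+v. (indicator I v + (\<Sum>u\<in>L. emeasure ?P (C u v))) \<partial>count_space UNIV)
      = (\<integral>\<^sup>+v. indicator I v \<partial>count_space UNIV) + (\<integral>\<^sup>+v. (\<Sum>u\<in>L. emeasure ?P (C u v)) \<partial>count_space UNIV)"
    by (rule nn_integral_add) (rule borel_measurable_count_space)+
  have e1: "(\<integral>\<^sup>+v. (\<Sum>u\<in>L. emeasure ?P (C u v)) \<partial>count_space UNIV)
      = (\<Sum>u\<in>L. (\<integral>\<^sup>+v. emeasure ?P (C u v) \<partial>count_space UNIV))"
    by (rule nn_integral_sum) (rule borel_measurable_count_space)
  have e2: "(\<Sum>u\<in>L. (\<integral>\<^sup>+v. emeasure ?P (C u v) \<partial>count_space UNIV)) = (\<Sum>u\<in>L. (2::ennreal))"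
  proof (rule sum.cong)
    fix u assume u: "u \<in> L"
    show "(\<integral>\<^sup>+v. emeasure ?P (C u v) \<partial>count_space UNIV) = 2"
      unfolding C_em q_eq by (rule geo_count) (use b2 LW[OF u] in auto)
  qed simp
  have e3: "(\<integral>\<^sup>+v. indicator I v \<partial>count_space UNIV) = of_nat (card I)"
    using fin_LI by (subst nn_integral_indicator) auto
  have e4: "(\<Sum>u\<in>L. (2::ennreal)) = 2 * of_nat (card L)" by (simp add: mult.commute)
  have A3: "of_nat (card I) + 2 * of_nat (card L) \<le> (2 * of_nat (card ?T) :: ennreal)"
  proof -
    have "card I + 2 * card L \<le> 2 * card ?T" using TIL fin_LI by (simp add: card_Un_disjoint)
    then have "(of_nat (card I + 2 * card L) :: ennreal) \<le> of_nat (2 * card ?T)" by (rule of_nat_mono)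
    then show ?thesis by simp
  qed
  show ?thesis using A1 A3 unfolding e0 e1 e2 e3 e4 by (rule order_trans)
qed

end
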